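(* For every positive integer $k$, the $2$-adic valuation of $s_k$ equals $\mathrm{wt}(k)-1$, where $\mathrm{wt}(k)$ is the number of $1$'s in the binary expansion of $k$. Consequently $\nu_2(s_{2k})=\mathrm{wt}(k)-1$ and $\nu_2(s_{k,k})\geq \mathrm{wt}(k)-2$.
   Context: $\nu_2:\mathbb{Q}^\times\to\mathbb{Z}$ is the $2$-adic valuation, $\nu_2(x/y)=\nu_2(x)-\nu_2(y)$. For a partition $I=(i_1,\dots,i_r)$ of $k$, $s_I$ denotes the coefficient of $p_{i_1}\cdots p_{i_r}$ in the $k$-th Hirzebruch $\mathcal{L}$-polynomial $\mathcal{L}_k(p_1,\dots,p_k)=\sum_{|I|=k}s_Ip_I$ (multiplicative sequence with characteristic power series $\sqrt t/\tanh\sqrt t$). In particular $s_k=\frac{2^{2k}(2^{2k-1}-1)|B_{2k}|}{(2k)!}$ with $B_j$ the Bernoulli numbers, and $s_{k,k}=\tfrac12(s_k^2-s_{2k})$. *)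

theory Defs
  imports Complex_Main "HOL-Computational_Algebra.Computational_Algebra"
begin

text \<open>Bernoulli numbers (convention B_1 = -1/2; only |B_{2k}| is used):
  B_0 = 1 and  sum_{j=0}^{n} C(n+1,j) B_j = 0 for n \<ge> 1.\<close>
fun bernoulli :: "nat \<Rightarrow> rat" where
  "bernoulli n = (if n = 0 then 1
     else - (\<Sum>j<n. of_nat ((n + 1) choose j) * bernoulli j) / of_nat (n + 1))"

declare bernoulli.simps [simp del]

definition nu2 :: "rat \<Rightarrow> int" where
  "nu2 x = (case quotient_of x of (a, b) \<Rightarrow>
      int (multiplicity (2::int) a) - int (multiplicity (2::int) b))"

fun wt :: "nat \<Rightarrow> nat" where
  "wt n = (if n = 0 then 0 else n mod 2 + wt (n div 2))"

declare wt.simps [simp del]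

text \<open>s_k = 2^{2k} (2^{2k-1}-1) |B_{2k}| / (2k)!, the coefficient of p_k in L_k.\<close>
definition s :: "nat \<Rightarrow> rat" where
  "s k = 2 ^ (2 * k) * (2 ^ (2 * k - 1) - 1) * \<bar>bernoulli (2 * k)\<bar> / of_nat (fact (2 * k))"

text \<open>s_{k,k} = (s_k^2 - s_{2k}) / 2, the coefficient of p_k^2 in L_{2k}.\<close>
definition s2 :: "nat \<Rightarrow> rat" where
  "s2 k = (s k ^ 2 - s (2 * k)) / 2"

end

theory Submission
  imports Defs
begin

lemma mult2_odd: "odd (b::int) \<Longrightarrow> multiplicity 2 b = 0"
  by (simp add: not_dvd_imp_multiplicity_0)

lemma prime_elem_2: "prime_elem (2::int)"
  by simp

lemma mult2_pow: "multiplicity (2::int) (2^n) = n"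
  by (simp add: multiplicity_prime_power)

lemma mult2_times: "(x::int) \<noteq> 0 \<Longrightarrow> y \<noteq> 0 \<Longrightarrow> multiplicity 2 (x*y) = multiplicity 2 x + multiplicity 2 y"
  by (rule prime_elem_multiplicity_mult_distrib) simp_all

lemma nu2_char:
  assumes eq: "x * of_int b * 2^e2 = 2^e1 * of_int a" and a: "odd a" and b: "odd b"
  shows "nu2 x = int e1 - int e2"
proof -
  obtain p q where qo: "quotient_of x = (p,q)" by (cases "quotient_of x") auto
  have q: "q > 0" using qo quotient_of_denom_pos by blast
  have x: "x = of_int p / of_int q" using qo quotient_of_div by blast
  have "of_int (p * b * 2^e2) = (of_int (2^e1 * a * q) :: rat)"
    using eq q unfolding x by (simp add: field_simps)
  hence e: "p * b * 2^e2 = 2^e1 * a * q" by (simp only: of_int_eq_iff)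
  have a0: "a \<noteq> 0" using a by auto
  have b0: "b \<noteq> 0" using b by auto
  have p0: "p \<noteq> 0" using e a0 q by auto
  have "multiplicity 2 (p * b * 2^e2) = multiplicity 2 p + e2"
    using p0 b0 by (simp add: mult2_times mult2_odd[OF b] mult2_pow)
  moreover have "multiplicity 2 (2^e1 * a * q) = e1 + multiplicity 2 q"
    using a0 q by (simp add: mult2_times mult2_odd[OF a] mult2_pow)
  ultimately have "multiplicity 2 p + e2 = e1 + multiplicity 2 q" using e by simp
  thus ?thesis unfolding nu2_def qo by simp
qed

lemma nu2_nonneg:
  assumes x: "x = of_int a / of_int b" and b: "odd b"
  shows "nu2 x \<ge> 0"
proof -
  obtain p q where qo: "quotient_of x = (p,q)" by (cases "quotient_of x") auto
  have q: "q > 0" using qo quotient_of_denom_pos by blast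
  have cp: "coprime p q" using qo quotient_of_coprime by blast
  have x': "x = of_int p / of_int q" using qo quotient_of_div by blast
  have b0: "b \<noteq> 0" using b by auto
  have "of_int (p * b) = (of_int (a * q) :: rat)"
    using x x' q b0 by (simp add: field_simps)
  hence e: "p * b = a * q" by (simp only: of_int_eq_iff)
  have "q dvd p * b" using e by simp
  hence "q dvd b" using cp by (metis coprime_commute coprime_dvd_mult_right_iff)
  hence "odd q" using b by (meson dvd_trans)
  thus ?thesis unfolding nu2_def qo by (simp add: mult2_odd)
qed

lemma wt_eq: "wt n = n mod 2 + wt (n div 2)"
  by (cases "n = 0") (simp_all add: wt.simps)

lemma wt_step: "Suc n = 2^v * d \<Longrightarrow> odd d \<Longrightarrow> wt n + 1 = wt (Suc n) + v"
proof (induction v arbitrary: n d)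
  case 0
  then have "even n" by simp presburger
  then show ?case using wt_eq[of n] wt_eq[of "Suc n"] by (simp add: odd_pos) presburger
next
  case (Suc v)
  then obtain m where n: "n = 2*m+1" by (metis dvd_mult_cancel1 even_Suc mult_2 oddE power_Suc zero_neq_numeral dvd_triv_left dvd_mult2)
  have "Suc m = 2^v * d" using Suc.prems n by simp
  from Suc.IH[OF this Suc.prems(2)] have "wt m + 1 = wt (Suc m) + v" .
  moreover have "wt n = 1 + wt m" using n by (subst wt.simps) simp
  moreover have "wt (Suc n) = wt (Suc m)" using n by (subst wt.simps) simp
  ultimately show ?case by simp
qed

lemma wt_le: "wt n \<le> n"
proof (induction n rule: less_induct)
  case (less n)
  show ?case
  proof (cases "n = 0")
    case False
    then have "wt (n div 2) \<le> n div 2" using less by simp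
    then show ?thesis using False by (subst wt.simps) simp
  qed (simp add: wt.simps)
qed

lemma wt_double: "wt (2*k) = wt k"
  by (subst wt.simps) (simp add: wt.simps)

lemma odd_part: "(n::nat) > 0 \<Longrightarrow> \<exists>v d. n = 2^v * d \<and> odd d"
proof (induction n rule: less_induct)
  case (less n)
  show ?case
  proof (cases "even n")
    case True
    then obtain m where m: "n = 2*m" by blast
    with less have "m < n" "m > 0" by auto
    with less obtain v d where "m = 2^v*d" "odd d" by blast
    then show ?thesis using m by (metis mult.assoc power_Suc)
  next
    case False then show ?thesis by (metis mult_1 power_0)
  qed
qed

lemma fact_2: "\<exists>c. odd c \<and> fact n = (2::nat)^(n - wt n) * c"
proof (induction n)
  case 0 then show ?case by (simp add: wt.simps)
next
  case (Suc n)
  then obtain c where c: "odd c" "fact n = (2::nat)^(n - wt n) * c" by blast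
  obtain v d where vd: "Suc n = 2^v * d" "odd d" using odd_part[of "Suc n"] by auto
  have w: "wt n + 1 = wt (Suc n) + v" by (rule wt_step[OF vd])
  have le: "wt n \<le> n" by (rule wt_le)
  have "fact (Suc n) = Suc n * fact n" by simp
  also have "\<dots> = 2^v * d * (2^(n - wt n) * c)" using vd c by simp
  also have "\<dots> = 2^(Suc n - wt (Suc n)) * (d*c)"
  proof -
    have "v + (n - wt n) = Suc n - wt (Suc n)" using w le by linarith
    then show ?thesis by (metis mult.assoc mult.left_commute power_add)
  qed
  finally show ?case using c vd by auto
qed


lemma bern_rec:
  assumes "n > 0"
  shows "(\<Sum>j\<le>n. of_nat (Suc n choose j) * bernoulli j) = 0"
proof -
  have b: "bernoulli n = - (\<Sum>j<n. of_nat ((n + 1) choose j) * bernoulli j) / of_nat (n + 1)"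
    using assms by (subst bernoulli.simps) simp
  have "(\<Sum>j\<le>n. of_nat (Suc n choose j) * bernoulli j)
      = (\<Sum>j<n. of_nat (Suc n choose j) * bernoulli j) + of_nat (Suc n) * bernoulli n"
    by (simp add: lessThan_Suc_atMost[symmetric])
  also have "\<dots> = 0" unfolding b by (simp add: field_simps)
  finally show ?thesis .
qed

definition bf :: "rat fps" where "bf = Abs_fps (\<lambda>n. bernoulli n / fact n)"
definition Df :: "rat fps" where "Df = Abs_fps (\<lambda>n. 1 / fact (Suc n))"
definition bf' :: "rat fps" where "bf' = Abs_fps (\<lambda>n. (-1)^n * bernoulli n / fact n)"
definition Df' :: "rat fps" where "Df' = Abs_fps (\<lambda>n. (-1)^n / fact (Suc n))"

lemma bD_nth: "(bf * Df) $ n = (\<Sum>i=0..n. bernoulli i / fact i * (1 / fact (Suc n - i)))"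
  unfolding bf_def Df_def fps_mult_nth by (intro sum.cong) (auto simp: Suc_diff_le)

lemma bD: "bf * Df = 1"
proof (rule fps_ext)
  fix n
  show "(bf * Df) $ n = 1 $ n"
  proof (cases "n = 0")
    case True then show ?thesis by (simp add: bD_nth bernoulli.simps bf_def Df_def)
  next
    case False
    have "(bf * Df) $ n = (\<Sum>i\<le>n. of_nat (Suc n choose i) * bernoulli i) / fact (Suc n)"
      unfolding bD_nth atMost_atLeast0 sum_divide_distrib
    proof (intro sum.cong refl)
      fix i assume "i \<in> {0..n}"
      hence i: "i \<le> Suc n" by simp
      show "bernoulli i / fact i * (1 / fact (Suc n - i)) = of_nat (Suc n choose i) * bernoulli i / fact (Suc n)"
      proof -
        have gen: "\<And>F a b B::rat. F \<noteq> 0 \<Longrightarrow> B / a * (1 / b) = F/(a*b) * B / F" by simp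
        show ?thesis unfolding binomial_fact[OF i] by (rule gen) simp
      qed
    qed
    also have "\<dots> = 0" using bern_rec False by simp
    finally show ?thesis using False by simp
  qed
qed

lemma bD': "bf' * Df' = 1"
proof (rule fps_ext)
  fix n
  have "(bf' * Df') $ n = (-1)^n * (bf * Df) $ n"
    unfolding fps_mult_nth sum_distrib_left
  proof (intro sum.cong refl)
    fix i assume "i \<in> {0..n}"
    hence i: "i \<le> n" by simp
    have "(-1::rat)^n = (-1)^i * (-1)^(n-i)" using i by (simp add: power_add[symmetric])
    then show "bf' $ i * Df' $ (n - i) = (-1)^n * (bf $ i * Df $ (n - i))"
      by (simp add: bf'_def Df'_def bf_def Df_def)
  qed
  then show "(bf' * Df') $ n = 1 $ n" using bD by simp
qed

lemma XD: "fps_X * Df = fps_exp 1 - 1"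
  apply (rule fps_ext)
  subgoal for n by (cases n) (simp_all add: Df_def algebra_simps)
  done

lemma XD': "fps_X * Df' = 1 - fps_exp (-1)"
  apply (rule fps_ext)
  subgoal for n by (cases n) (simp_all add: Df'_def algebra_simps)
  done

lemma EE: "fps_exp (1::rat) * fps_exp (-1) = 1"
  using fps_exp_add_mult[of "1::rat" "-1"] by simp

lemma D_ED': "Df = fps_exp 1 * Df'"
proof -
  have "fps_X * (fps_exp 1 * Df') = fps_exp 1 * (fps_X * Df')" by (simp add: algebra_simps)
  also have "\<dots> = fps_exp 1 - fps_exp 1 * fps_exp (-1)" unfolding XD' by (simp add: algebra_simps)
  also have "\<dots> = fps_X * Df" using EE XD by simp
  finally show ?thesis by (simp add: fps_X_neq_zero)
qed

lemma bf'_eq: "bf' = bf + fps_X"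
proof -
  have "bf' = bf' * (bf * Df)" using bD by simp
  also have "\<dots> = (bf' * Df') * (bf * fps_exp 1)" unfolding D_ED' by (simp add: algebra_simps)
  also have "\<dots> = bf * fps_exp 1" using bD' by simp
  also have "\<dots> = bf + bf * (fps_X * Df)" unfolding XD by (simp add: algebra_simps)
  also have "\<dots> = bf + fps_X" using bD by (simp add: algebra_simps)
  finally show ?thesis .
qed

lemma bernoulli_odd: "odd n \<Longrightarrow> n > 1 \<Longrightarrow> bernoulli n = 0"
proof -
  assume n: "odd n" "n > 1"
  have "bf' $ n = (bf + fps_X) $ n" using bf'_eq by simp
  hence "- bernoulli n / fact n = bernoulli n / fact n" using n
    by (simp add: bf'_def bf_def fps_X_def)
  thus ?thesis by simp
qed


definition I2 :: "rat \<Rightarrow> bool" where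
  "I2 x \<longleftrightarrow> (\<exists>a b. odd b \<and> x = of_int a / of_int b)"

lemma I2_int: "I2 (of_int a)"
  unfolding I2_def by (rule exI[of _ a], rule exI[of _ 1]) simp

lemma I2_nat: "I2 (of_nat a)"
  using I2_int[of "int a"] by simp

lemma I2_add: "I2 x \<Longrightarrow> I2 y \<Longrightarrow> I2 (x + y)"
  unfolding I2_def
proof (elim exE conjE)
  fix a b c d assume b: "odd (b::int)" and x: "x = of_int a / of_int b" and d: "odd (d::int)" and y: "y = of_int c / of_int d"
  have "b \<noteq> 0" "d \<noteq> 0" using b d by auto
  hence "x + y = of_int (a*d + c*b) / of_int (b*d)" using x y by (simp add: field_simps)
  moreover have "odd (b*d)" using b d by simp
  ultimately show "\<exists>a b. odd b \<and> x + y = rat_of_int a / rat_of_int b" by blast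
qed

lemma I2_mult: "I2 x \<Longrightarrow> I2 y \<Longrightarrow> I2 (x * y)"
  unfolding I2_def
proof (elim exE conjE)
  fix a b c d assume b: "odd (b::int)" and x: "x = of_int a / of_int b" and d: "odd (d::int)" and y: "y = of_int c / of_int d"
  have "x * y = of_int (a*c) / of_int (b*d)" using b d x y by (auto simp: field_simps)
  moreover have "odd (b*d)" using b d by simp
  ultimately show "\<exists>a b. odd b \<and> x * y = rat_of_int a / rat_of_int b" by blast
qed

lemma I2_div: "I2 x \<Longrightarrow> odd (c::int) \<Longrightarrow> I2 (x / of_int c)"
  unfolding I2_def
proof (elim exE conjE)
  fix a b assume b: "odd (b::int)" and x: "x = of_int a / of_int b" and c: "odd c"
  have "x / of_int c = of_int a / of_int (b*c)" using x by simp
  moreover have "odd (b*c)" using b c by simp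
  ultimately show "\<exists>a b. odd b \<and> x / of_int c = rat_of_int a / rat_of_int b" by blast
qed

lemma I2_neg: "I2 x \<Longrightarrow> I2 (- x)"
  using I2_mult[OF I2_int[of "-1"]] by simp

lemma I2_sum: "(\<And>j. j \<in> A \<Longrightarrow> I2 (f j)) \<Longrightarrow> I2 (sum f A)"
proof (induction A rule: infinite_finite_induct)
  case (infinite A) then show ?case using I2_int[of 0] by simp
next
  case empty then show ?case using I2_int[of 0] by simp
next
  case (insert x F) then show ?case by (simp add: I2_add)
qed

lemma even_sum_lt:
  assumes n: "even n" "n > 0"
  shows "(\<Sum>j<n. if even j then of_nat (Suc n choose j) else 0) = (2::rat)^n - of_nat (Suc n)"
proof -
  have "2 * (\<Sum>i\<le>Suc n. if even i then of_nat (Suc n choose i) else 0) = (2::rat) ^ Suc n"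
    by (rule choose_even_sum) simp
  hence "(\<Sum>i\<le>Suc n. if even i then of_nat (Suc n choose i) else 0) = (2::rat) ^ n" by simp
  moreover have "(\<Sum>i\<le>Suc n. if even i then of_nat (Suc n choose i) else (0::rat))
      = (\<Sum>j<n. if even j then of_nat (Suc n choose j) else 0) + of_nat (Suc n)"
    using n by (simp add: lessThan_Suc_atMost[symmetric])
  ultimately show ?thesis by simp
qed

lemma bern_even_I2: "even n \<Longrightarrow> n \<ge> 2 \<Longrightarrow> I2 (bernoulli n + 1/2)"
proof (induction n rule: less_induct)
  case (less n)
  define t :: "nat \<Rightarrow> rat" where "t j = (-1/2) * (if even j then 1 else 0) + (if j = 0 then 3/2 else 0) + (if j = 1 then -1/2 else 0)" for j
  define c where "c j = bernoulli j - t j" for j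
  have cI: "I2 (c j)" if "j < n" for j
  proof -
    consider "j = 0" | "j = 1" | "even j" "j \<ge> 2" | "odd j" "j > 1" by fastforce
    then show ?thesis
    proof cases
      case 1 then show ?thesis using I2_int[of 0] by (simp add: c_def t_def bernoulli.simps)
    next
      case 2 then show ?thesis using I2_int[of 0] by (simp add: c_def t_def bernoulli.simps)
    next
      case 3 then show ?thesis using less.IH[OF that 3] by (simp add: c_def t_def)
    next
      case 4 then show ?thesis using I2_int[of 0] bernoulli_odd[OF 4] by (simp add: c_def t_def)
    qed
  qed
  define S where "S = (\<Sum>j<n. of_nat (Suc n choose j) * c j)"
  have SI: "I2 S" unfolding S_def by (rule I2_sum, rule I2_mult[OF I2_nat cI]) simp
  have n1: "n > 1" "1 < n" using less.prems by auto
  have T: "(\<Sum>j<n. of_nat (Suc n choose j) * t j) = 3/2 - 2^n / 2"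
  proof -
    have "(\<Sum>j<n. of_nat (Suc n choose j) * t j)
       = (-1/2) * (\<Sum>j<n. if even j then of_nat (Suc n choose j) else 0)
         + (\<Sum>j<n. if j = 0 then 3/2 * of_nat (Suc n choose j) else 0)
         + (\<Sum>j<n. if j = 1 then -1/2 * of_nat (Suc n choose j) else 0)"
      unfolding t_def sum_distrib_left sum.distrib[symmetric]
      by (intro sum.cong refl) (auto simp: algebra_simps)
    also have "\<dots> = (-1/2) * ((2::rat)^n - of_nat (Suc n)) + 3/2 + (-1/2) * of_nat (Suc n)"
      using n1 less.prems by (simp add: even_sum_lt)
    finally show ?thesis by (simp add: algebra_simps)
  qed
  have "(\<Sum>j\<le>n. of_nat (Suc n choose j) * bernoulli j) = 0"
    using bern_rec n1 by simp
  hence "(\<Sum>j<n. of_nat (Suc n choose j) * bernoulli j) + of_nat (Suc n) * bernoulli n = 0"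
    by (simp add: lessThan_Suc_atMost[symmetric])
  moreover have "(\<Sum>j<n. of_nat (Suc n choose j) * bernoulli j) = S + (3/2 - 2^n/2)"
    unfolding S_def T[symmetric] sum.distrib[symmetric]
    by (intro sum.cong refl) (simp add: c_def algebra_simps)
  ultimately have Bn: "bernoulli n = - (S + (3/2 - 2^n/2)) / of_nat (Suc n)"
    by (simp add: field_simps)
  obtain m where m: "n = 2*m" "m \<ge> 1" using less.prems by (auto elim!: evenE)
  have eq: "bernoulli n + 1/2 = (- S + of_int (2^(2*m-1) + int m - 1)) / of_int (2*m+1)"
  proof -
    have p: "(2::rat)^n = 2 * 2^(2*m-1)" using m by (metis Suc_pred' mult_pos_pos pos2 power_Suc zero_less_one_class.zero_le_one le_eq_less_or_eq less_le_trans less_one not_less zero_less_numeral)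
    show ?thesis unfolding Bn using p m by (simp add: field_simps)
  qed
  have "I2 (- S + of_int (2^(2*m-1) + int m - 1))" by (rule I2_add[OF I2_neg[OF SI] I2_int])
  hence "I2 ((- S + of_int (2^(2*m-1) + int m - 1)) / of_int (2*m+1))" by (rule I2_div) simp
  then show ?case unfolding eq .
qed


lemma wt_pos: "k > 0 \<Longrightarrow> wt k > 0"
proof (induction k rule: less_induct)
  case (less k)
  show ?case
  proof (cases "even k")
    case True
    then have "k div 2 < k" "k div 2 > 0" using less.prems by auto
    then show ?thesis using less.IH wt_eq[of k] by simp
  next
    case False then show ?thesis using wt_eq[of k] by (simp add: odd_iff_mod_2_eq_one)
  qed
qed

lemma bern_form:
  assumes "k > 0"
  shows "\<exists>a b. odd a \<and> odd b \<and> \<bar>bernoulli (2*k)\<bar> = of_int a / (2 * of_int b)"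
proof -
  have "I2 (bernoulli (2*k) + 1/2)" using assms by (intro bern_even_I2) auto
  then obtain c d where d: "odd (d::int)" and cd: "bernoulli (2*k) + 1/2 = of_int c / of_int d"
    unfolding I2_def by blast
  have d0: "d \<noteq> 0" using d by auto
  have B: "bernoulli (2*k) = of_int (2*c - d) / (2 * of_int d)"
    using cd d0 by (simp add: field_simps)
  have "\<bar>bernoulli (2*k)\<bar> = of_int \<bar>2*c - d\<bar> / (2 * of_int \<bar>d\<bar>)"
    unfolding B by (simp add: abs_divide abs_mult)
  moreover have "odd \<bar>2*c - d\<bar>" "odd \<bar>d\<bar>" using d by auto
  ultimately show ?thesis by blast
qed

lemma s_form:
  assumes k: "k > 0"
  shows "\<exists>A D. odd A \<and> odd D \<and> s k * of_int D * 2 = 2^(wt k) * of_int A"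
proof -
  obtain a b where ab: "odd a" "odd b" "\<bar>bernoulli (2*k)\<bar> = of_int a / (2 * of_int b)"
    using bern_form[OF k] by blast
  obtain c where c: "odd c" "fact (2*k) = (2::nat)^(2*k - wt (2*k)) * c" using fact_2 by blast
  define w where "w = wt k"
  have w2: "wt (2*k) = w" unfolding w_def by (rule wt_double)
  have wle: "w \<le> 2*k" using wt_le[of k] unfolding w_def by simp
  have fr: "(of_nat (fact (2*k) :: nat) :: rat) = 2^(2*k - w) * of_nat c"
    using arg_cong[OF c(2), of "of_nat :: nat \<Rightarrow> rat"] w2 by simp
  define oo' where "oo' = (2::int)^(2*k-1) - 1"
  have oo: "odd oo'" unfolding oo'_def using k by simp
  have or: "(2::rat)^(2*k-1) - 1 = of_int oo'" unfolding oo'_def by simp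
  have p: "(2::rat)^(2*k) = 2^(2*k - w) * 2^w" using wle by (simp add: power_add[symmetric])
  have b0: "b \<noteq> 0" "c \<noteq> 0" using ab c(1) by (auto intro: odd_pos)
  have "s k * of_int (b * int c) * 2 = 2^w * of_int (oo' * a)"
    unfolding s_def ab(3) fr or p using b0 by (simp add: field_simps)
  moreover have "odd (oo'*a)" "odd (b * int c)" using oo ab c by auto
  ultimately show ?thesis unfolding w_def by blast
qed

theorem mainTheorem3:
  fixes k :: nat
  assumes "k > 0"
  shows "nu2 (s k) = int (wt k) - 1 \<and> nu2 (s (2 * k)) = int (wt k) - 1
         \<and> nu2 (s2 k) \<ge> int (wt k) - 2"
proof -
  define w where "w = wt k"
  have w1: "w \<ge> 1" using wt_pos[OF assms] unfolding w_def by simp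
  obtain A1 D1 where 1: "odd A1" "odd D1" "s k * of_int D1 * 2 = 2^w * of_int A1"
    using s_form[OF assms] unfolding w_def by blast
  obtain A2 D2 where 2: "odd A2" "odd D2" "s (2*k) * of_int D2 * 2 = 2^w * of_int A2"
    using s_form[of "2*k"] assms wt_double[of k] unfolding w_def by auto
  have r1: "nu2 (s k) = int w - 1"
    using nu2_char[of "s k" D1 1 w A1] 1 by simp
  have r2: "nu2 (s (2*k)) = int w - 1"
    using nu2_char[of "s (2*k)" D2 1 w A2] 2 by simp
  have D0: "D1 \<noteq> 0" "D2 \<noteq> 0" using 1 2 by auto
  have sk: "s k = 2^w * of_int A1 / (2 * of_int D1)" using 1(3) D0 by (simp add: field_simps)
  have s2k: "s (2*k) = 2^w * of_int A2 / (2 * of_int D2)" using 2(3) D0 by (simp add: field_simps)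
  define N where "N = 2^(w-1) * A1^2 * D2 - A2 * D1^2"
  have pw: "(2::rat)^w = 2 * 2^(w-1)" using w1 by (metis Suc_diff_le diff_Suc_1 power_Suc)
  have key: "s2 k * of_int (D1^2 * D2) * 2^2 = 2^w * of_int N"
    unfolding s2_def sk s2k N_def using D0 pw by (simp add: field_simps power2_eq_square)
  have r3: "nu2 (s2 k) \<ge> int w - 2"
  proof (cases "w \<ge> 2")
    case True
    have "odd N" unfolding N_def using True 1 2 by simp
    moreover have "odd (D1^2 * D2)" using 1 2 by simp
    ultimately have "nu2 (s2 k) = int w - int 2" using nu2_char[OF key] by blast
    then show ?thesis by simp
  next
    case False
    hence w: "w = 1" using w1 by simp
    have "even N" unfolding N_def using w 1 2 by simp
    then obtain M where M: "N = 2 * M" by blast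
    have "s2 k = of_int M / of_int (D1^2 * D2)"
      using key D0 unfolding M w by (simp add: field_simps)
    moreover have "odd (D1^2 * D2)" using 1 2 by simp
    ultimately have "nu2 (s2 k) \<ge> 0" by (rule nu2_nonneg)
    then show ?thesis using w by simp
  qed
  show ?thesis using r1 r2 r3 unfolding w_def by simp
qed

end
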